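(* If $\mu>-3$ and $|\nu|<\mu+3$, then the function $x\mapsto x\tilde{t}_{\mu,\nu}'(x)/\tilde{t}_{\mu,\nu}(x)$ is strictly increasing on $(0,\infty)$.
   Context: For real $\mu,\nu$ the (normalized) modified Lommel function of the first kind is $$\tilde{t}_{\mu,\nu}(x)=\sum_{k=0}^\infty\frac{(\frac{1}{2}x)^{\mu+2k+1}}{\Gamma\big(k+\frac{\mu-\nu+3}{2}\big)\Gamma\big(k+\frac{\mu+\nu+3}{2}\big)},\quad x>0.$$ *)

theory Defs
  imports "HOL-Analysis.Analysis"
begin

definition lommel_t :: "real \<Rightarrow> real \<Rightarrow> real \<Rightarrow> real" where
  "lommel_t \<mu> \<nu> x =
     (\<Sum>k. (x / 2) powr (\<mu> + 2 * real k + 1) /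
           (Gamma (real k + (\<mu> - \<nu> + 3) / 2) * Gamma (real k + (\<mu> + \<nu> + 3) / 2)))"

end

theory Submission
  imports Defs
begin

lemma coef_step:
  fixes a b :: real assumes "a > 0" "b > 0"
  shows "1 / (Gamma (real (Suc n) + a) * Gamma (real (Suc n) + b))
       = (1 / (Gamma (real n + a) * Gamma (real n + b))) / ((real n + a) * (real n + b))"
proof -
  have na: "real n + a \<notin> \<int>\<^sub>\<le>\<^sub>0" using assms nonpos_Ints_nonpos by force
  have nb: "real n + b \<notin> \<int>\<^sub>\<le>\<^sub>0" using assms nonpos_Ints_nonpos by force
  have "Gamma (real (Suc n) + a) = (real n + a) * Gamma (real n + a)"
    using Gamma_plus1[OF na] by (simp add: algebra_simps)
  moreover have "Gamma (real (Suc n) + b) = (real n + b) * Gamma (real n + b)"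
    using Gamma_plus1[OF nb] by (simp add: algebra_simps)
  ultimately show ?thesis by simp
qed

lemma coef_summable:
  fixes a b :: real assumes "a > 0" "b > 0"
  shows "summable (\<lambda>n. 1 / (Gamma (real n + a) * Gamma (real n + b)) * y ^ n)"
proof (rule summable_ratio_test[where c = "1/2" and N = "nat \<lceil>2 * \<bar>y\<bar>\<rceil> + 1"])
  fix n assume n: "n \<ge> nat \<lceil>2 * \<bar>y\<bar>\<rceil> + 1"
  define c where "c = 1 / (Gamma (real n + a) * Gamma (real n + b))"
  have cpos: "c > 0" unfolding c_def using assms by auto
  have n1: "real n \<ge> 1" and n2: "real n \<ge> 2 * \<bar>y\<bar>" using n by linarith+
  have "real n * real n \<le> (real n + a) * (real n + b)"
    using assms by (intro mult_mono) auto
  moreover have "real n \<le> real n * real n" using n1 by (simp add: mult_le_cancel_left1)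
  ultimately have big: "2 * \<bar>y\<bar> \<le> (real n + a) * (real n + b)" using n2 by linarith
  have pp: "(real n + a) * (real n + b) > 0" using assms by auto
  have "norm (c / ((real n + a) * (real n + b)) * y ^ Suc n)
     = c * \<bar>y\<bar> ^ n * (\<bar>y\<bar> / ((real n + a) * (real n + b)))"
    using cpos pp assms by (simp add: abs_mult power_abs)
  also have "\<dots> \<le> c * \<bar>y\<bar> ^ n * (1/2)"
    using cpos pp big by (intro mult_left_mono) (auto simp: field_simps)
  finally show "norm (1 / (Gamma (real (Suc n) + a) * Gamma (real (Suc n) + b)) * y ^ Suc n)
        \<le> 1 / 2 * norm (1 / (Gamma (real n + a) * Gamma (real n + b)) * y ^ n)"
    unfolding coef_step[OF assms] c_def[symmetric] using cpos by (simp add: abs_mult power_abs)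
qed simp

lemma nc_summable:
  fixes c :: "nat \<Rightarrow> real"
  assumes cpos: "\<And>n. c n > 0" and sm: "\<And>y. summable (\<lambda>n. c n * y ^ n)"
  shows "summable (\<lambda>n. real n * c n * y ^ n)"
proof (rule summable_comparison_test[OF _ sm[of "2 * \<bar>y\<bar>"]])
  have "\<forall>n. norm (real n * c n * y ^ n) \<le> c n * (2 * \<bar>y\<bar>) ^ n"
  proof
    fix n
    have "real n \<le> 2 ^ n" using less_exp[of n] 
    proof -
      have "real n \<le> real (2 ^ n)" using less_exp[of n] by linarith
      thus ?thesis by simp
    qed
    hence "real n * \<bar>y\<bar> ^ n \<le> 2 ^ n * \<bar>y\<bar> ^ n" by (intro mult_right_mono) auto
    thus "norm (real n * c n * y ^ n) \<le> c n * (2 * \<bar>y\<bar>) ^ n"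
      using cpos[of n] by (simp add: abs_mult power_abs power_mult_distrib abs_of_pos mult_left_mono mult.assoc[symmetric] mult.commute[of "c n"])
  qed
  thus "\<exists>N. \<forall>n\<ge>N. norm (real n * c n * y ^ n) \<le> c n * (2 * \<bar>y\<bar>) ^ n" by blast
qed

lemma cheb:
  fixes c :: "nat \<Rightarrow> real"
  assumes cpos: "\<And>n. c n > 0" and sm: "\<And>y. summable (\<lambda>n. c n * y ^ n)"
    and y: "0 < y" and yz: "y < z"
  shows "(\<Sum>n. real n * c n * y ^ n) / (\<Sum>n. c n * y ^ n)
       < (\<Sum>n. real n * c n * z ^ n) / (\<Sum>n. c n * z ^ n)"
proof -
  define D where "D = (\<Sum>n. c n * y ^ n)"
  define N where "N = (\<Sum>n. real n * c n * y ^ n)"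
  define m where "m = N / D"
  define r where "r = z / y"
  have r1: "r > 1" using y yz by (simp add: r_def)
  have zr: "z = r * y" using y by (simp add: r_def)
  have Dpos: "D > 0" unfolding D_def
    by (rule suminf_pos2[where i=0]) (use sm cpos y in \<open>auto intro: less_imp_le\<close>)
  have Npos: "N > 0" unfolding N_def
  proof (rule suminf_pos2[where i=1])
    show "summable (\<lambda>n. real n * c n * y ^ n)" by (rule nc_summable[OF cpos sm])
    show "0 \<le> real n * c n * y ^ n" for n using cpos[of n] y by (intro mult_nonneg_nonneg) auto
    show "0 < real 1 * c 1 * y ^ 1" using cpos[of 1] y by simp
  qed
  have mpos: "m > 0" using Dpos Npos by (simp add: m_def)
  have s1: "summable (\<lambda>n. c n * y ^ n)" by (rule sm)
  have s2: "summable (\<lambda>n. real n * c n * y ^ n)" by (rule nc_summable[OF cpos sm])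
  have s3: "summable (\<lambda>n. c n * z ^ n)" by (rule sm)
  have s4: "summable (\<lambda>n. real n * c n * z ^ n)" by (rule nc_summable[OF cpos sm])
  define f where "f n = c n * y ^ n * (real n - m) * (r ^ n - r powr m)" for n
  have f_eq: "f n = (real n * c n * z ^ n - m * (c n * z ^ n)) - r powr m * (real n * c n * y ^ n - m * (c n * y ^ n))" for n
    unfolding f_def zr by (simp add: power_mult_distrib algebra_simps)
  have fsums: "f sums (((\<Sum>n. real n * c n * z ^ n) - m * (\<Sum>n. c n * z ^ n)) - r powr m * (N - m * D))"
    unfolding f_eq N_def D_def
    by (intro sums_diff sums_mult summable_sums s1 s2 s3 s4)
  have fs: "summable f" using fsums by (rule sums_summable)
  have fsum: "suminf f = ((\<Sum>n. real n * c n * z ^ n) - m * (\<Sum>n. c n * z ^ n)) - r powr m * (N - m * D)"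
    using fsums by (rule sums_unique[symmetric])
  have NmD: "N - m * D = 0" using Dpos by (simp add: m_def)
  have fnn: "f n \<ge> 0" for n
  proof (cases "real n \<ge> m")
    case True
    have "r powr m \<le> r powr real n" using r1 True by (intro powr_mono) auto
    hence "r powr m \<le> r ^ n" using r1 by (simp add: powr_realpow)
    thus ?thesis unfolding f_def using cpos[of n] y True by (intro mult_nonneg_nonneg) auto
  next
    case False
    have "r powr real n \<le> r powr m" using r1 False by (intro powr_mono) auto
    hence "r ^ n \<le> r powr m" using r1 by (simp add: powr_realpow)
    hence "0 \<le> (m - real n) * (r powr m - r ^ n)" using False by (intro mult_nonneg_nonneg) auto
    hence "0 \<le> (real n - m) * (r ^ n - r powr m)" by (simp add: algebra_simps)
    moreover have "0 \<le> c n * y ^ n" using cpos[of n] y by auto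
    ultimately show ?thesis unfolding f_def by (metis mult.assoc mult_nonneg_nonneg)
  qed
  have f0: "f 0 > 0"
  proof -
    have "r powr 0 < r powr m" using r1 mpos by (intro powr_less_mono) auto
    hence "1 < r powr m" using r1 by simp
    thus ?thesis unfolding f_def using cpos[of 0] mpos by (simp add: mult_pos_neg)
  qed
  have "suminf f > 0" by (rule suminf_pos2[OF fs fnn f0])
  hence "(\<Sum>n. real n * c n * z ^ n) - m * (\<Sum>n. c n * z ^ n) > 0" using fsum NmD by simp
  moreover have "(\<Sum>n. c n * z ^ n) > 0"
    by (rule suminf_pos2[where i=0]) (use sm cpos y yz in \<open>auto intro: less_imp_le\<close>)
  ultimately have "m < (\<Sum>n. real n * c n * z ^ n) / (\<Sum>n. c n * z ^ n)"
    by (simp add: field_simps)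
  thus ?thesis by (simp add: m_def N_def D_def)
qed

lemma xdiff:
  fixes c :: "nat \<Rightarrow> real"
  assumes sm: "\<And>y. summable (\<lambda>n. c n * y ^ n)"
  shows "y * (\<Sum>n. diffs c n * y ^ n) = (\<Sum>n. real n * c n * y ^ n)"
proof -
  have "(\<lambda>n. y * (diffs c n * y ^ n)) sums (y * (\<Sum>n. diffs c n * y ^ n))"
    by (intro sums_mult summable_sums termdiff_converges_all sm)
  hence "(\<lambda>n. real (Suc n) * c (Suc n) * y ^ Suc n) sums (y * (\<Sum>n. diffs c n * y ^ n))"
    by (simp add: diffs_def algebra_simps)
  hence "(\<lambda>n. real n * c n * y ^ n) sums (y * (\<Sum>n. diffs c n * y ^ n) + real 0 * c 0 * y ^ 0)"
    by (subst sums_Suc_iff[symmetric]) simp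
  thus ?thesis by (simp add: sums_iff)
qed

lemma phi_alg:
  assumes x: "x > (0::real)" and qpos: "(x/2) powr \<mu> > 0" and Pp: "P > 0"
  shows "x * ((\<mu> + 1) * (x/2) powr \<mu> / 2 * P + (x/2) powr \<mu> * (x / 2) * (P' * (x / 2))) / ((x/2) powr \<mu> * (x / 2) * P)
     = (\<mu> + 1) + 2 * ((x/2)^2 * P') / P"
  using x qpos Pp by (simp add: field_simps power2_eq_square)

theorem theorem3p2:
  fixes \<mu> \<nu> :: real
  assumes "\<mu> > -3" and "\<bar>\<nu>\<bar> < \<mu> + 3"
  shows "strict_mono_on {0<..} (\<lambda>x. x * deriv (lommel_t \<mu> \<nu>) x / lommel_t \<mu> \<nu> x)"
proof -
  define a where "a = (\<mu> - \<nu> + 3) / 2"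
  define b where "b = (\<mu> + \<nu> + 3) / 2"
  have apos: "a > 0" and bpos: "b > 0" using assms by (auto simp: a_def b_def)
  define c where "c n = 1 / (Gamma (real n + a) * Gamma (real n + b))" for n
  have cpos: "\<And>n. c n > 0" unfolding c_def using apos bpos by auto
  have sm: "\<And>y. summable (\<lambda>n. c n * y ^ n)" unfolding c_def by (rule coef_summable[OF apos bpos])
  define P where "P y = (\<Sum>n. c n * y ^ n)" for y
  define P' where "P' y = (\<Sum>n. diffs c n * y ^ n)" for y
  define q where "q x = (x / 2) powr (\<mu> + 1)" for x :: real
  define s where "s x = (x / 2) ^ 2" for x :: real
  have Pder: "(P has_real_derivative P' y) (at y)" for y
    unfolding P_def P'_def by (rule termdiffs_strong_converges_everywhere[OF sm])
  have Ppos: "P y > 0" if "y > 0" for y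
    unfolding P_def by (rule suminf_pos2[where i=0]) (use sm cpos that in \<open>auto intro: less_imp_le\<close>)
  have lom: "lommel_t \<mu> \<nu> x = q x * P (s x)" if x: "x > 0" for x
  proof -
    have "lommel_t \<mu> \<nu> x = (\<Sum>n. q x * (c n * s x ^ n))"
      unfolding lommel_t_def
    proof (intro suminf_cong)
      fix n
      have "(x / 2) powr (\<mu> + 2 * real n + 1) = (x/2) powr (\<mu> + 1) * (x/2) powr (2 * real n)"
        by (subst powr_add[symmetric]) (simp add: algebra_simps)
      also have "(x/2) powr (2 * real n) = ((x/2)^2)^n"
      proof -
        have e1: "((x/2)^2)^n = (x/2)^(2*n)" by (simp only: power_mult)
        have e2: "(x/2::real)^(2*n) = (x/2) powr real (2*n)" by (rule powr_realpow[symmetric]) (use x in simp)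
        have e3: "real (2*n) = 2 * real n" by simp
        show ?thesis unfolding e1 e2 e3 ..
      qed
      finally show "(x / 2) powr (\<mu> + 2 * real n + 1) / (Gamma (real n + (\<mu> - \<nu> + 3) / 2) * Gamma (real n + (\<mu> + \<nu> + 3) / 2))
          = q x * (c n * s x ^ n)"
        by (simp add: q_def s_def c_def a_def b_def)
    qed
    also have "\<dots> = q x * P (s x)" unfolding P_def by (rule suminf_mult[OF sm])
    finally show ?thesis .
  qed
  have der: "deriv (lommel_t \<mu> \<nu>) x = (\<mu> + 1) * (x/2) powr \<mu> / 2 * P (s x) + q x * (P' (s x) * (x / 2))"
    if x: "x > 0" for x
  proof -
    have "((\<lambda>x. q x * P (s x)) has_real_derivative
        (\<mu> + 1) * (x/2) powr \<mu> / 2 * P (s x) + q x * (P' (s x) * (x / 2))) (at x)"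
      unfolding q_def s_def
    proof -
      have d1: "((\<lambda>x. (x / 2) powr (\<mu> + 1)) has_real_derivative (\<mu> + 1) * (x/2) powr \<mu> / 2) (at x)"
        using x by (auto intro!: derivative_eq_intros)
      have d2: "((\<lambda>x. (x / 2) ^ 2) has_real_derivative x / 2) (at x)"
        by (auto intro!: derivative_eq_intros simp: power2_eq_square)
      have d3: "((\<lambda>x. P ((x / 2) ^ 2)) has_real_derivative P' ((x / 2) ^ 2) * (x / 2)) (at x)"
        by (rule DERIV_chain2[OF Pder d2])
      show "((\<lambda>x. (x / 2) powr (\<mu> + 1) * P ((x / 2) ^ 2)) has_real_derivative
        (\<mu> + 1) * (x/2) powr \<mu> / 2 * P ((x / 2) ^ 2) + (x / 2) powr (\<mu> + 1) * (P' ((x / 2) ^ 2) * (x / 2))) (at x)"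
        by (rule DERIV_cong[OF DERIV_mult[OF d1 d3]]) (simp add: algebra_simps)
    qed
    hence "(lommel_t \<mu> \<nu> has_real_derivative
        (\<mu> + 1) * (x/2) powr \<mu> / 2 * P (s x) + q x * (P' (s x) * (x / 2))) (at x)"
      by (rule has_field_derivative_transform_within_open[where S="{0<..}"]) (use x lom in auto)
    thus ?thesis by (rule DERIV_imp_deriv)
  qed
  define G where "G y = (\<Sum>n. real n * c n * y ^ n) / P y" for y
  have phi: "x * deriv (lommel_t \<mu> \<nu>) x / lommel_t \<mu> \<nu> x = (\<mu> + 1) + 2 * G (s x)"
    if x: "x > 0" for x
  proof -
    have qq: "q x = (x/2) powr \<mu> * (x / 2)" unfolding q_def using x by (simp add: powr_add)
    have qpos: "(x/2) powr \<mu> > 0" using x by simp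
    have Pp: "P (s x) > 0" using Ppos x by (simp add: s_def)
    have "x * deriv (lommel_t \<mu> \<nu>) x / lommel_t \<mu> \<nu> x
        = (\<mu> + 1) + 2 * (s x * P' (s x)) / P (s x)"
      unfolding der[OF x] lom[OF x] qq using phi_alg[OF x qpos Pp[unfolded s_def]] unfolding s_def
      by simp
    thus ?thesis unfolding G_def P'_def xdiff[OF sm] P_def by simp
  qed
  show ?thesis
  proof (rule strict_mono_onI)
    fix x y :: real assume "x \<in> {0<..}" "y \<in> {0<..}" "x < y"
    hence x: "x > 0" and xy: "x < y" by auto
    have "s x < s y" unfolding s_def using x xy by (intro power_strict_mono) auto
    moreover have "s x > 0" unfolding s_def using x by simp
    ultimately have "G (s x) < G (s y)" unfolding G_def P_def by (rule cheb[OF cpos sm, rotated])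
    thus "x * deriv (lommel_t \<mu> \<nu>) x / lommel_t \<mu> \<nu> x < y * deriv (lommel_t \<mu> \<nu>) y / lommel_t \<mu> \<nu> y"
      using phi x xy by simp
  qed
qed

end
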